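(* Let $n\ge 2$ and $g$ be integers with $\gcd(n,g)=1$. The permutation matrix $Q_g$ has $(1,1)$ entry $1$, so it can be written as $Q_g=\begin{pmatrix}1&\mathbf 0\\ \mathbf 0&\mathbf W\end{pmatrix}$ with $\mathbf W$ a permutation matrix of order $n-1$. Then $\mathbf W$ is a primary permutation matrix if and only if $n\nmid (g^{\ell_2}-g^{\ell_1})$ for all integers $0\le \ell_1<\ell_2\le n-2$.
   Context: For an integer $h$, $Q_h$ denotes the $n\times n$ matrix whose $(i,j)$ entry is $1$ if $j\equiv 1+(i-1)h\pmod n$ (indices taken in $\{1,\dots,n\}$) and $0$ otherwise; it is the $h$-circulant matrix with first row $(1,0,\dots,0)$, where an $h$-circulant matrix is one whose each row is the preceding row cyclically shifted $h$ places to the right. A permutation matrix of order $m$ is called primary if its associated permutation is a single cycle of length $m$. *)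

theory Defs
  imports "HOL-Number_Theory.Number_Theory"
begin

text \<open>Matrices are represented as functions nat \<Rightarrow> nat \<Rightarrow> int, indexed (as in the paper)
  by 1..m; entries outside this range are irrelevant.\<close>

text \<open>The h-circulant matrix Q_h of order n with first row (1,0,...,0):
  entry (i,j) is 1 iff j = 1 + (i-1)h (mod n).\<close>
definition Qmat :: "nat \<Rightarrow> int \<Rightarrow> nat \<Rightarrow> nat \<Rightarrow> int" where
  "Qmat n h i j = (if [int j = 1 + (int i - 1) * h] (mod int n) then 1 else 0)"

definition is_perm_matrix :: "(nat \<Rightarrow> nat \<Rightarrow> int) \<Rightarrow> nat \<Rightarrow> bool" where
  "is_perm_matrix M m \<longleftrightarrow>
     (\<forall>i\<in>{1..m}. \<forall>j\<in>{1..m}. M i j = 0 \<or> M i j = 1) \<and>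
     (\<forall>i\<in>{1..m}. \<exists>!j. j \<in> {1..m} \<and> M i j = 1) \<and>
     (\<forall>j\<in>{1..m}. \<exists>!i. i \<in> {1..m} \<and> M i j = 1)"

definition perm_of_matrix :: "(nat \<Rightarrow> nat \<Rightarrow> int) \<Rightarrow> nat \<Rightarrow> nat \<Rightarrow> nat" where
  "perm_of_matrix M m i = (THE j. j \<in> {1..m} \<and> M i j = 1)"

text \<open>Primary: the associated permutation is a single cycle of length m, i.e. some
  point's orbit x, \<sigma> x, ..., \<sigma>^(m-1) x exhausts {1..m}.\<close>
definition primary_perm_matrix :: "(nat \<Rightarrow> nat \<Rightarrow> int) \<Rightarrow> nat \<Rightarrow> bool" where
  "primary_perm_matrix M m \<longleftrightarrow> is_perm_matrix M m \<and>
     (\<exists>x\<in>{1..m}. (\<lambda>k. (perm_of_matrix M m ^^ k) x) ` {..<m} = {1..m})"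

end

theory Submission
  imports Defs
begin

lemma ndvd_aux:
  fixes n :: nat and g :: int
  assumes "coprime (int n) g" "x \<in> {1..n-1}"
  shows "\<not> int n dvd int x * g ^ k"
proof
  assume "int n dvd int x * g ^ k"
  moreover have "coprime (int n) (g ^ k)" using assms(1) by simp
  ultimately have "int n dvd int x" using coprime_dvd_mult_left_iff by blast
  hence "n dvd x" by simp
  thus False using assms(2) by (auto dest: dvd_imp_le)
qed

lemma range_aux:
  fixes n :: nat and g :: int
  assumes "n \<ge> 2" "coprime (int n) g" "x \<in> {1..n-1}"
  shows "nat ((int x * g ^ k) mod int n) \<in> {1..n-1}"
proof -
  have "(int x * g ^ k) mod int n \<noteq> 0" using ndvd_aux[OF assms(2,3)] by (simp add: dvd_eq_mod_eq_0)
  moreover have "(int x * g ^ k) mod int n \<ge> 0" "(int x * g ^ k) mod int n < int n" using assms(1) by auto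
  ultimately show ?thesis by auto
qed

lemma W_iff:
  fixes n :: nat and g :: int
  assumes "n \<ge> 2" "j \<in> {1..n-1}"
  shows "Qmat n g (i+1) (j+1) = 1 \<longleftrightarrow> int j = (int i * g) mod int n"
proof -
  have "Qmat n g (i+1) (j+1) = 1 \<longleftrightarrow> [int j + 1 = int i * g + 1] (mod int n)"
    unfolding Qmat_def by (simp add: add.commute)
  also have "\<dots> \<longleftrightarrow> [int j = int i * g] (mod int n)" by (rule cong_add_rcancel)
  also have "\<dots> \<longleftrightarrow> int j mod int n = (int i * g) mod int n" by (simp add: cong_def)
  also have "int j mod int n = int j" using assms by auto
  finally show ?thesis .
qed

theorem mainTheorem2:
  fixes n :: nat and g :: int
  assumes "n \<ge> 2" and "coprime (int n) g"
  defines "W \<equiv> (\<lambda>i j. Qmat n g (i + 1) (j + 1))"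
  shows "Qmat n g 1 1 = 1 \<and> (\<forall>j\<in>{2..n}. Qmat n g 1 j = 0 \<and> Qmat n g j 1 = 0)
         \<and> is_perm_matrix W (n - 1)
         \<and> (primary_perm_matrix W (n - 1) \<longleftrightarrow>
             (\<forall>l1 l2 :: nat. l1 < l2 \<and> l2 \<le> n - 2 \<longrightarrow> \<not> (int n dvd g ^ l2 - g ^ l1)))"
proof -
  define f where "f i = nat ((int i * g) mod int n)" for i :: nat
  have frange: "f i \<in> {1..n-1}" if "i \<in> {1..n-1}" for i
    using range_aux[OF assms(1,2) that, of 1] unfolding f_def by simp
  have Wiff: "W i j = 1 \<longleftrightarrow> j = f i" if "j \<in> {1..n-1}" for i j
  proof -
    have "W i j = 1 \<longleftrightarrow> int j = (int i * g) mod int n"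
      using W_iff[OF assms(1) that, where g=g and i=i] unfolding W_def .
    also have "\<dots> \<longleftrightarrow> j = f i" unfolding f_def using assms(1) by (auto simp: nat_eq_iff)
    finally show ?thesis .
  qed
  have W01: "W i j = 0 \<or> W i j = 1" for i j unfolding W_def Qmat_def by auto
  have P1: "Qmat n g 1 1 = 1" unfolding Qmat_def by simp
  have P2: "Qmat n g 1 j = 0 \<and> Qmat n g j 1 = 0" if "j \<in> {2..n}" for j
  proof -
    have a0: "\<not> n dvd (j - 1)" using that by (auto dest: dvd_imp_le)
    have a: "\<not> int n dvd int (j - 1)" using a0 int_dvd_int_iff by blast
    have jj: "int (j - 1) = int j - 1" using that by auto
    have jr: "j - 1 \<in> {1..n-1}" using that by auto
    have b: "\<not> int n dvd int (j - 1) * g ^ 1" using ndvd_aux[OF assms(2) jr, of 1] .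
    have "\<not> [int j = 1] (mod int n)"
    proof
      assume "[int j = 1] (mod int n)"
      hence "int n dvd int j - 1" by (simp add: cong_iff_dvd_diff)
      thus False using a jj by simp
    qed
    moreover have "\<not> [1 = 1 + (int j - 1) * g] (mod int n)"
    proof
      assume "[1 = 1 + (int j - 1) * g] (mod int n)"
      hence "int n dvd (int j - 1) * g" by (simp add: cong_iff_dvd_diff dvd_diff_commute)
      thus False using b jj by simp
    qed
    ultimately show ?thesis unfolding Qmat_def by auto
  qed
  have finj: "f i = f j \<Longrightarrow> i \<in> {1..n-1} \<Longrightarrow> j \<in> {1..n-1} \<Longrightarrow> i = j" for i j
  proof -
    assume e: "f i = f j" and i: "i \<in> {1..n-1}" and j: "j \<in> {1..n-1}"
    have "(int i * g) mod int n = (int j * g) mod int n"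
      using e assms(1) unfolding f_def by (simp add: eq_nat_nat_iff)
    hence "[int i * g = int j * g] (mod int n)" by (simp add: cong_def)
    hence "[int i = int j] (mod int n)"
      using cong_mult_rcancel[of g "int n" "int i" "int j"] assms(2) by (simp add: coprime_commute)
    moreover have "int i < int n" "int j < int n" using i j by auto
    ultimately have "int i = int j" using cong_less_imp_eq_int[of "int i" "int n" "int j"] by simp
    thus "i = j" by simp
  qed
  have fsurj: "j \<in> f ` {1..n-1}" if "j \<in> {1..n-1}" for j
  proof -
    have "f ` {1..n-1} \<subseteq> {1..n-1}" using frange by auto
    moreover have "card (f ` {1..n-1}) = card {1..n-1}"
      by (rule card_image, rule inj_onI, rule finj)
    ultimately have "f ` {1..n-1} = {1..n-1}" by (simp add: card_subset_eq)
    thus ?thesis using that by auto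
  qed
  have PM: "is_perm_matrix W (n - 1)"
    unfolding is_perm_matrix_def
  proof (intro conjI ballI)
    fix i j show "W i j = 0 \<or> W i j = 1" by (rule W01)
  next
    fix i assume i: "i \<in> {1..n-1}"
    show "\<exists>!j. j \<in> {1..n - 1} \<and> W i j = 1"
      apply (rule ex1I[of _ "f i"])
      using frange[OF i] Wiff by auto
  next
    fix j assume j: "j \<in> {1..n-1}"
    show "\<exists>!i. i \<in> {1..n - 1} \<and> W i j = 1"
    proof -
      obtain i where i: "i \<in> {1..n-1}" "j = f i" using fsurj[OF j] by blast
      show ?thesis
        apply (rule ex1I[of _ i])
        using i Wiff[OF j] finj by auto
    qed
  qed
  have perm: "perm_of_matrix W (n-1) i = f i" if "i \<in> {1..n-1}" for i
    unfolding perm_of_matrix_def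
    apply (rule the_equality)
    using frange[OF that] Wiff by auto
  have iter: "(perm_of_matrix W (n-1) ^^ k) x = nat ((int x * g ^ k) mod int n)" if x: "x \<in> {1..n-1}" for x k
  proof (induction k)
    case 0 then show ?case using x by auto
  next
    case (Suc k)
    have r: "nat ((int x * g ^ k) mod int n) \<in> {1..n-1}" using range_aux[OF assms(1,2) x] .
    have "(perm_of_matrix W (n-1) ^^ Suc k) x = f (nat ((int x * g ^ k) mod int n))"
      using Suc perm[OF r] by simp
    also have "\<dots> = nat ((int x * g ^ Suc k) mod int n)"
    proof -
      have "((int x * g ^ k) mod int n * g) mod int n = (int x * g ^ k * g) mod int n"
        by (rule mod_mult_left_eq)
      also have "int x * g ^ k * g = int x * g ^ Suc k" by (simp add: mult.assoc mult.commute)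
      finally show ?thesis unfolding f_def using assms(1) by simp
    qed
    finally show ?case .
  qed
  have P3: "primary_perm_matrix W (n - 1) \<longleftrightarrow>
             (\<forall>l1 l2 :: nat. l1 < l2 \<and> l2 \<le> n - 2 \<longrightarrow> \<not> (int n dvd g ^ l2 - g ^ l1))"
  proof
    assume "primary_perm_matrix W (n - 1)"
    then obtain x where x: "x \<in> {1..n-1}"
      and im: "(\<lambda>k. (perm_of_matrix W (n-1) ^^ k) x) ` {..<n-1} = {1..n-1}"
      unfolding primary_perm_matrix_def by blast
    have "card ((\<lambda>k. (perm_of_matrix W (n-1) ^^ k) x) ` {..<n-1}) = card {..<n-1}"
      using im by simp
    hence inj: "inj_on (\<lambda>k. (perm_of_matrix W (n-1) ^^ k) x) {..<n-1}"
      by (simp add: inj_on_iff_eq_card)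
    show "\<forall>l1 l2 :: nat. l1 < l2 \<and> l2 \<le> n - 2 \<longrightarrow> \<not> (int n dvd g ^ l2 - g ^ l1)"
    proof (intro allI impI notI)
      fix l1 l2 :: nat assume l: "l1 < l2 \<and> l2 \<le> n - 2" and d: "int n dvd g ^ l2 - g ^ l1"
      have "int n dvd int x * (g ^ l2 - g ^ l1)" using d by simp
      hence "[int x * g ^ l1 = int x * g ^ l2] (mod int n)"
        by (simp add: cong_iff_dvd_diff dvd_diff_commute right_diff_distrib)
      hence "nat ((int x * g ^ l1) mod int n) = nat ((int x * g ^ l2) mod int n)"
        by (simp add: cong_def)
      hence "(perm_of_matrix W (n-1) ^^ l1) x = (perm_of_matrix W (n-1) ^^ l2) x"
        using iter[OF x] by simp
      moreover have "l1 \<in> {..<n-1}" "l2 \<in> {..<n-1}" using l assms(1) by auto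
      ultimately have "l1 = l2" using inj by (meson inj_onD)
      thus False using l by simp
    qed
  next
    assume H: "\<forall>l1 l2 :: nat. l1 < l2 \<and> l2 \<le> n - 2 \<longrightarrow> \<not> (int n dvd g ^ l2 - g ^ l1)"
    have x: "(1::nat) \<in> {1..n-1}" using assms(1) by auto
    define h where "h k = (perm_of_matrix W (n-1) ^^ k) 1" for k
    have h: "h k = nat ((g ^ k) mod int n)" for k unfolding h_def using iter[OF x, of k] by simp
    have sub: "h ` {..<n-1} \<subseteq> {1..n-1}"
      using range_aux[OF assms(1,2) x] unfolding h_def iter[OF x] by auto
    have key: "a = b" if ab: "a < b" "b \<le> n - 2" "h a = h b" for a b
    proof -
      have "g ^ a mod int n = g ^ b mod int n" using ab(3) unfolding h
        using assms(1) by (simp add: eq_nat_nat_iff)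
      hence "int n dvd g ^ b - g ^ a" by (metis cong_def cong_iff_dvd_diff)
      thus ?thesis using H ab by blast
    qed
    have inj: "inj_on h {..<n-1}"
    proof (rule inj_onI)
      fix a b assume a: "a \<in> {..<n-1}" and b: "b \<in> {..<n-1}" and e: "h a = h b"
      show "a = b"
      proof (cases a b rule: linorder_cases)
        case less
        have "b \<le> n - 2" using b by simp
        then show ?thesis using key[of a b] less e by auto
      next
        case greater
        have "a \<le> n - 2" using a by simp
        then show ?thesis using key[of b a] greater e by auto
      qed simp
    qed
    have "card (h ` {..<n-1}) = card {1..n-1}" using card_image[OF inj] by simp
    hence "h ` {..<n-1} = {1..n-1}" using sub by (simp add: card_subset_eq)
    thus "primary_perm_matrix W (n - 1)"
      unfolding primary_perm_matrix_def using PM x unfolding h_def by blast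
  qed
  show ?thesis using P1 P2 PM P3 by blast
qed

end
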